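(* Let $u$ be a one-sided Sturmian sequence with left special sequence $l=l_1l_2\dots$. Let $xl_1l_2\dots l_{n-1}$ and $wl_1\dots l_{m-1}$ with $1\le m<n$ and $x,w\in\{0,1\}$ be consecutive right special significant blocks of $\tilde X_u$, and let $y\in\{0,1\}$ with $y\neq l_n$. Then $\mathrm{sig}(xl_1l_2\dots l_{n-1}y)=\mathrm{sig}(wl_1\dots l_{m-1}y)$.
   Context: A sequence $u\in\{0,1\}^{\mathbb N}$ is Sturmian if for every $n\ge1$ exactly $n+1$ distinct blocks of length $n$ occur in $u$. $X_u^+$ is the closure of $\{\sigma^n u:n\in\mathbb N\}$, $\sigma$ the shift $(\sigma x)_i=x_{i+1}$, and $\tilde X_u=\{x\in\{0,1\}^{\mathbb Z}: x_px_{p+1}\dots\in X_u^+\ \forall p\}$; the languages of $u$, $X_u^+$, $\tilde X_u$ coincide. For each $n$ there is a unique block $L_n$ of length $n$ with $0L_n$ and $1L_n$ in the language; these are the prefixes $L_n=l_1\dots l_n$ of the left special sequence $l$. A block $v$ is right special if both $v0$ and $v1$ are in the language; the right special block of length $n$ is $l_nl_{n-1}\dots l_1$. For a block $a_{-n}\dots a_0$ in the language, $\mathrm{fol}(a_{-n}\dots a_0)=\{b_0b_1\dots\in X_u^+:\exists b\in\tilde X_u,\ b_{-n}\dots b_0=a_{-n}\dots a_0\}$. A block $a_{-n}\dots a_0$ ($n\ge1$) is significant if $\mathrm{fol}(a_{-n}\dots a_0)\subsetneq\mathrm{fol}(a_{-n+1}\dots a_0)$; $0$ and $1$ are also significant.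 $\mathrm{sig}(\cdot)$ is the longest significant suffix. For $m=1$ the block $wl_1\dots l_{m-1}$ is the single symbol $w$. The two blocks being consecutive means both are right special significant blocks and there is no right special significant block of length strictly between $m$ and $n$. *)

theory Defs
  imports Main
begin

text \<open>Alphabet {0,1} is rendered as bool (False = 0, True = 1).
  One-sided sequences: nat => bool; two-sided: int => bool; blocks: bool lists.\<close>

definition occurs_in :: "(nat \<Rightarrow> bool) \<Rightarrow> bool list \<Rightarrow> bool" where
  "occurs_in u v \<longleftrightarrow> (\<exists>k. \<forall>i<length v. u (k + i) = v ! i)"

definition lang :: "(nat \<Rightarrow> bool) \<Rightarrow> bool list set" where
  "lang u = {v. occurs_in u v}"

definition sturmian :: "(nat \<Rightarrow> bool) \<Rightarrow> bool" where
  "sturmian u \<longleftrightarrow> (\<forall>n\<ge>1. card {v \<in> lang u. length v = n} = n + 1)"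

text \<open>Closure of the forward orbit of u in the product topology on {0,1}^N:
  a sequence lies in it iff every prefix occurs in u.\<close>
definition Xplus :: "(nat \<Rightarrow> bool) \<Rightarrow> (nat \<Rightarrow> bool) set" where
  "Xplus u = {x. \<forall>n. \<exists>k. \<forall>i<n. x i = u (k + i)}"

definition Xtilde :: "(nat \<Rightarrow> bool) \<Rightarrow> (int \<Rightarrow> bool) set" where
  "Xtilde u = {x. \<forall>p::int. (\<lambda>i::nat. x (p + int i)) \<in> Xplus u}"

text \<open>fol(a_{-n}..a_0): the block a (a list of length n+1) sits at positions -n..0.\<close>
definition fol :: "(nat \<Rightarrow> bool) \<Rightarrow> bool list \<Rightarrow> (nat \<Rightarrow> bool) set" where
  "fol u a = {(\<lambda>i::nat. b (int i)) | b. b \<in> Xtilde u \<and>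
      (\<forall>i<length a. b (int i - int (length a - 1)) = a ! i)}"

definition significant :: "(nat \<Rightarrow> bool) \<Rightarrow> bool list \<Rightarrow> bool" where
  "significant u v \<longleftrightarrow> v \<in> lang u \<and>
     (length v = 1 \<or> (length v \<ge> 2 \<and> fol u v \<subset> fol u (tl v)))"

definition sig :: "(nat \<Rightarrow> bool) \<Rightarrow> bool list \<Rightarrow> bool list" where
  "sig u v = drop (LEAST k. k < length v \<and> significant u (drop k v)) v"

definition right_special :: "(nat \<Rightarrow> bool) \<Rightarrow> bool list \<Rightarrow> bool" where
  "right_special u v \<longleftrightarrow> v @ [False] \<in> lang u \<and> v @ [True] \<in> lang u"

definition left_special :: "(nat \<Rightarrow> bool) \<Rightarrow> bool list \<Rightarrow> bool" where
  "left_special u v \<longleftrightarrow> False # v \<in> lang u \<and> True # v \<in> lang u"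

text \<open>l is the left special sequence l_1 l_2 ... (value l 0 unused):
  every prefix L_n = l_1 ... l_n is left special.\<close>
definition left_special_seq :: "(nat \<Rightarrow> bool) \<Rightarrow> (nat \<Rightarrow> bool) \<Rightarrow> bool" where
  "left_special_seq u l \<longleftrightarrow> (\<forall>n. left_special u (map l [1..<n+1]))"

end

theory Submission imports Defs begin

lemma lang_append: "v @ w \<in> lang u \<Longrightarrow> v \<in> lang u \<and> w \<in> lang u"
proof -
  assume "v @ w \<in> lang u"
  then obtain k where k: "\<forall>i<length (v@w). u (k + i) = (v@w) ! i"
    by (auto simp: lang_def occurs_in_def)
  have "\<forall>i<length v. u (k + i) = v ! i" using k by (auto simp: nth_append)
  moreover have "\<forall>i<length w. u ((k + length v) + i) = w ! i"
  proof (intro allI impI)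
    fix i assume "i < length w"
    then show "u ((k + length v) + i) = w ! i" using k[rule_format, of "length v + i"]
      by (simp add: nth_append add.assoc)
  qed
  ultimately show ?thesis by (auto simp: lang_def occurs_in_def)
qed

lemma xt_shift: "b \<in> Xtilde u \<Longrightarrow> (\<lambda>t. b (t + c)) \<in> Xtilde u"
proof -
  assume "b \<in> Xtilde u"
  then have h: "\<forall>p. (\<lambda>i::nat. b (p + int i)) \<in> Xplus u" by (simp add: Xtilde_def)
  show ?thesis unfolding Xtilde_def
  proof (intro CollectI allI)
    fix p :: int
    have "(\<lambda>i::nat. b ((p + c) + int i)) \<in> Xplus u" using h by blast
    moreover have "(\<lambda>i::nat. b ((p + c) + int i)) = (\<lambda>i::nat. b (p + int i + c))"
      by (auto simp: algebra_simps)
    ultimately show "(\<lambda>i::nat. b (p + int i + c)) \<in> Xplus u" by simp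
  qed
qed

lemma xt_window: "b \<in> Xtilde u \<Longrightarrow> (\<forall>i<length v. b (p + int i) = v ! i) \<Longrightarrow> v \<in> lang u"
proof -
  assume "b \<in> Xtilde u" "\<forall>i<length v. b (p + int i) = v ! i"
  then have "(\<lambda>i::nat. b (p + int i)) \<in> Xplus u" by (simp add: Xtilde_def)
  then obtain k where "\<forall>i<length v. b (p + int i) = u (k + i)" by (auto simp: Xplus_def)
  with \<open>\<forall>i<length v. b (p + int i) = v ! i\<close> show ?thesis
    by (auto simp: lang_def occurs_in_def)
qed

lemma fol_mono: "fol u a \<subseteq> fol u (tl a)"
proof
  fix z assume "z \<in> fol u a"
  then obtain b where b: "b \<in> Xtilde u" "z = (\<lambda>i. b (int i))"
    "\<forall>i<length a. b (int i - int (length a - 1)) = a ! i" by (auto simp: fol_def)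
  have "\<forall>i<length (tl a). b (int i - int (length (tl a) - 1)) = tl a ! i"
  proof (intro allI impI)
    fix i assume "i < length (tl a)"
    then have "Suc i < length a" "length a \<ge> 2" by auto
    then show "b (int i - int (length (tl a) - 1)) = tl a ! i"
      using b(3)[rule_format, of "Suc i"] by (cases a) (auto simp: algebra_simps of_nat_diff)
  qed
  then show "z \<in> fol u (tl a)" using b by (auto simp: fol_def)
qed

lemma fol_snoc:
  assumes "s \<noteq> []" "fol u (tl s) \<subseteq> fol u s"
  shows "fol u (tl s @ [y]) \<subseteq> fol u (s @ [y])"
proof
  fix z assume "z \<in> fol u (tl s @ [y])"
  then obtain b where b: "b \<in> Xtilde u" "z = (\<lambda>i. b (int i))"
    "\<forall>i<length s. b (int i - int (length s - 1)) = (tl s @ [y]) ! i"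
    using assms(1) by (auto simp: fol_def)
  define j where "j = length s"
  have j1: "j \<ge> 1" using assms(1) j_def by (cases s) auto
  define b' where "b' = (\<lambda>t. b (t + (-1)))"
  have b'x: "b' \<in> Xtilde u" unfolding b'_def by (rule xt_shift[OF b(1)])
  have "\<forall>i<length (tl s). b' (int i - int (length (tl s) - 1)) = tl s ! i"
  proof (intro allI impI)
    fix i assume i: "i < length (tl s)"
    then have "i < j" "j \<ge> 2" using j_def by auto
    then have "b (int i - int (j - 1)) = (tl s @ [y]) ! i" using b(3) j_def by auto
    moreover have "(tl s @ [y]) ! i = tl s ! i" using i by (simp add: nth_append)
    moreover have eq: "int i - int (length (tl s) - 1) + (-1) = int i - int (j - 1)"
      using \<open>j \<ge> 2\<close> j_def by (simp add: of_nat_diff)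
    moreover have "b' (int i - int (length (tl s) - 1)) = b (int i - int (j - 1))"
      unfolding b'_def eq ..
    ultimately show "b' (int i - int (length (tl s) - 1)) = tl s ! i" by simp
  qed
  then have "(\<lambda>i. b' (int i)) \<in> fol u (tl s)" using b'x by (auto simp: fol_def)
  then have "(\<lambda>i. b' (int i)) \<in> fol u s" using assms(2) by blast
  then obtain b'' where b'': "b'' \<in> Xtilde u" "(\<lambda>i. b' (int i)) = (\<lambda>i. b'' (int i))"
    "\<forall>i<length s. b'' (int i - int (length s - 1)) = s ! i" by (auto simp: fol_def)
  define b3 where "b3 = (\<lambda>t. b'' (t + 1))"
  have b3x: "b3 \<in> Xtilde u" unfolding b3_def by (rule xt_shift[OF b''(1)])
  have pos: "b'' (int i) = b' (int i)" for i using b''(2) by metis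
  have "z = (\<lambda>i. b3 (int i))"
  proof
    fix i
    have "b3 (int i) = b'' (int (Suc i))" by (simp add: b3_def add.commute)
    also have "\<dots> = b' (int (Suc i))" by (rule pos)
    also have "\<dots> = b (int i)" by (simp add: b'_def)
    finally show "z i = b3 (int i)" using b(2) by simp
  qed
  moreover have "\<forall>i<length (s @ [y]). b3 (int i - int (length (s @ [y]) - 1)) = (s @ [y]) ! i"
  proof (intro allI impI)
    fix i assume i: "i < length (s @ [y])"
    show "b3 (int i - int (length (s @ [y]) - 1)) = (s @ [y]) ! i"
    proof (cases "i < j")
      case True
      then have "b3 (int i - int (length (s @ [y]) - 1)) = b'' (int i - int (j - 1))"
        using j1 j_def by (simp add: b3_def of_nat_diff algebra_simps)
      also have "\<dots> = s ! i" using b''(3) True j_def by auto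
      finally show ?thesis using True j_def by (simp add: nth_append)
    next
      case False
      then have ij: "i = j" using i j_def by simp
      have "b3 (int i - int (length (s @ [y]) - 1)) = b'' 1" using ij j_def by (simp add: b3_def)
      also have "\<dots> = b' 1" using pos[of 1] by simp
      also have "\<dots> = b 0" by (simp add: b'_def)
      also have "\<dots> = (tl s @ [y]) ! (j - 1)" using b(3)[rule_format, of "j - 1"] j1 j_def by simp
      also have "\<dots> = y" using j_def by (simp add: nth_append)
      finally show ?thesis using ij j_def by simp
    qed
  qed
  ultimately show "z \<in> fol u (s @ [y])" using b3x unfolding fol_def by blast
qed

lemma rs_unique:
  assumes st: "sturmian u" and m: "m \<ge> 1"
    and r1: "length r1 = m" "right_special u r1"
    and r2: "length r2 = m" "right_special u r2"
  shows "r1 = r2"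
proof -
  define A where "A = {v \<in> lang u. length v = m}"
  define A0 where "A0 = {v \<in> A. v @ [False] \<in> lang u}"
  define A1 where "A1 = {v \<in> A. v @ [True] \<in> lang u}"
  define B where "B = {v \<in> lang u. length v = Suc m}"
  have finA: "finite A"
    by (rule finite_subset[OF _ finite_lists_length_eq[of "UNIV::bool set" m]]) (auto simp: A_def)
  have fin0: "finite A0" "finite A1" using finA by (auto simp: A0_def A1_def)
  have AU: "A = A0 \<union> A1"
  proof
    show "A \<subseteq> A0 \<union> A1"
    proof
      fix v assume "v \<in> A"
      then obtain k where k: "\<forall>i<length v. u (k + i) = v ! i" "length v = m"
        by (auto simp: A_def lang_def occurs_in_def)
      have "v @ [u (k + m)] \<in> lang u"
        unfolding lang_def occurs_in_def using k
        by (auto simp: nth_append less_Suc_eq)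
      then show "v \<in> A0 \<union> A1" using \<open>v \<in> A\<close> by (cases "u (k + m)") (auto simp: A0_def A1_def)
    qed
  qed (auto simp: A0_def A1_def)
  have BU: "B = (\<lambda>v. v @ [False]) ` A0 \<union> (\<lambda>v. v @ [True]) ` A1"
  proof
    show "B \<subseteq> (\<lambda>v. v @ [False]) ` A0 \<union> (\<lambda>v. v @ [True]) ` A1"
    proof
      fix v assume v: "v \<in> B"
      then have ne: "v \<noteq> []" by (auto simp: B_def)
      then have vs: "v = butlast v @ [last v]" by simp
      have "butlast v \<in> lang u" using v vs lang_append[of "butlast v" "[last v]" u]
        by (auto simp: B_def)
      then have "butlast v \<in> A" using v by (auto simp: A_def B_def)
      then show "v \<in> (\<lambda>v. v @ [False]) ` A0 \<union> (\<lambda>v. v @ [True]) ` A1"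
        using v vs by (cases "last v") (auto simp: A0_def A1_def B_def intro!: image_eqI[where x="butlast v"])
    qed
  next
    show "(\<lambda>v. v @ [False]) ` A0 \<union> (\<lambda>v. v @ [True]) ` A1 \<subseteq> B"
      by (auto simp: A0_def A1_def A_def B_def)
  qed
  have "card B = card ((\<lambda>v. v @ [False]) ` A0) + card ((\<lambda>v. v @ [True]) ` A1)"
    unfolding BU by (rule card_Un_disjoint) (use fin0 in auto)
  also have "\<dots> = card A0 + card A1"
    by (simp add: card_image inj_on_def)
  also have "\<dots> = card A + card (A0 \<inter> A1)" using card_Un_Int[OF fin0] AU by simp
  finally have "card B = card A + card (A0 \<inter> A1)" .
  moreover have "card B = Suc m + 1" using st unfolding sturmian_def B_def by auto
  moreover have "card A = m + 1" using st m unfolding sturmian_def A_def by auto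
  ultimately have c1: "card (A0 \<inter> A1) = 1" by simp
  have "r1 \<in> lang u" "r2 \<in> lang u"
    using r1(2) r2(2) lang_append[of r1 "[False]" u] lang_append[of r2 "[False]" u]
    unfolding right_special_def by blast+
  then have "r1 \<in> A0 \<inter> A1" "r2 \<in> A0 \<inter> A1" using r1 r2
    unfolding A0_def A1_def A_def right_special_def by blast+
  then show ?thesis using c1 by (metis card_1_singletonE singletonD)
qed

lemma sig_shift:
  assumes "V = p @ W" "\<forall>k<length p. \<not> significant u (drop k V)"
    "\<exists>k<length W. significant u (drop k W)"
  shows "sig u V = sig u W"
proof -
  define K where "K = (LEAST k. k < length W \<and> significant u (drop k W))"
  have K: "K < length W \<and> significant u (drop K W)"
    unfolding K_def by (rule LeastI_ex) (use assms(3) in auto)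
  have Kmin: "\<And>k. k < length W \<and> significant u (drop k W) \<Longrightarrow> K \<le> k"
    unfolding K_def by (rule Least_le)
  have "(LEAST k. k < length V \<and> significant u (drop k V)) = length p + K"
  proof (rule Least_equality)
    show "length p + K < length V \<and> significant u (drop (length p + K) V)"
      using K assms(1) by simp
  next
    fix k assume k: "k < length V \<and> significant u (drop k V)"
    show "length p + K \<le> k"
    proof (cases "k < length p")
      case True then show ?thesis using k assms(2) by blast
    next
      case False
      then have "k - length p < length W \<and> significant u (drop (k - length p) W)"
        using k assms(1) by auto
      then show ?thesis using Kmin False by fastforce
    qed
  qed
  then show ?thesis using assms(1) by (simp add: sig_def K_def)
qed

lemma whole_case:
  assumes st: "sturmian u" and ls: "left_special_seq u l" and n: "n \<ge> 1"
    and rs: "right_special u (x # map l [1..<n])" and y: "y \<noteq> l n"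
  shows "fol u (map l [1..<n] @ [y]) \<subseteq> fol u (x # map l [1..<n] @ [y])"
proof
  define L where "L = map l [1..<n]"
  have lL: "length L = n - 1" by (simp add: L_def)
  fix z assume "z \<in> fol u (map l [1..<n] @ [y])"
  then obtain b where b: "b \<in> Xtilde u" "z = (\<lambda>i. b (int i))"
    "\<forall>i<n. b (int i - int (n - 1)) = (L @ [y]) ! i"
    using n by (auto simp: fol_def L_def)
  show "z \<in> fol u (x # map l [1..<n] @ [y])"
  proof (cases "b (- int n) = x")
    case True
    have "\<forall>i<length (x # L @ [y]). b (int i - int (length (x # L @ [y]) - 1)) = (x # L @ [y]) ! i"
    proof (intro allI impI)
      fix i assume i: "i < length (x # L @ [y])"
      show "b (int i - int (length (x # L @ [y]) - 1)) = (x # L @ [y]) ! i"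
      proof (cases i)
        case 0 then show ?thesis using True lL n by simp
      next
        case (Suc i')
        then have "i' < n" using i lL n by simp
        then have "b (int i' - int (n - 1)) = (L @ [y]) ! i'" using b(3) by blast
        moreover have "int i - int (length (x # L @ [y]) - 1) = int i' - int (n - 1)"
          using Suc lL n by (simp add: of_nat_diff)
        ultimately show ?thesis using Suc by simp
      qed
    qed
    then show ?thesis using b unfolding fol_def L_def by blast
  next
    case False
    have "\<forall>i<length ((\<not>x) # L @ [y]). b (- int n + int i) = ((\<not>x) # L @ [y]) ! i"
    proof (intro allI impI)
      fix i assume i: "i < length ((\<not>x) # L @ [y])"
      show "b (- int n + int i) = ((\<not>x) # L @ [y]) ! i"
      proof (cases i)
        case 0 then show ?thesis using False by simp
      next
        case (Suc i')
        then have "i' < n" using i lL n by simp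
        then have "b (int i' - int (n - 1)) = (L @ [y]) ! i'" using b(3) by blast
        moreover have eq: "- int n + int i = int i' - int (n - 1)"
          using Suc n by (simp add: of_nat_diff)
        moreover have "b (- int n + int i) = b (int i' - int (n - 1))" using eq by (rule arg_cong)
        ultimately show ?thesis using Suc by simp
      qed
    qed
    then have l1: "(\<not>x) # L @ [y] \<in> lang u" by (rule xt_window[OF b(1)])
    have "map l [1..<n+1] = L @ [l n]" using n by (simp add: L_def)
    then have "left_special u (L @ [l n])" using ls unfolding left_special_seq_def by metis
    then have l2: "(\<not>x) # L @ [l n] \<in> lang u" unfolding left_special_def by (cases x) auto
    have "right_special u ((\<not>x) # L)"
      using l1 l2 y unfolding right_special_def by (cases y) auto
    then have "(\<not>x) # L = x # L"
      using rs_unique[OF st n, of "(\<not>x) # L" "x # L"] rs lL n by (simp add: L_def)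
    then show ?thesis by simp
  qed
qed

theorem lemma4p11:
  fixes u l :: "nat \<Rightarrow> bool" and x w y :: bool and m n :: nat
  assumes "sturmian u"
    and "left_special_seq u l"
    and "1 \<le> m" and "m < n"
    and "right_special u (x # map l [1..<n])" and "significant u (x # map l [1..<n])"
    and "right_special u (w # map l [1..<m])" and "significant u (w # map l [1..<m])"
    and "\<forall>v. right_special u v \<and> significant u v \<longrightarrow> \<not> (m < length v \<and> length v < n)"
    and "y \<noteq> l n"
  shows "sig u (x # map l [1..<n] @ [y]) = sig u (w # map l [1..<m] @ [y])"
proof -
  define P where "P = x # map l [1..<n]"
  define Q where "Q = w # map l [1..<m]"
  have lP: "length P = n" using assms(4) by (simp add: P_def)
  have lQ: "length Q = m" using assms(3) by (simp add: Q_def)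
  have rsP: "right_special u P" using assms(5) by (simp add: P_def)
  define D where "D = drop (n - m) P"
  have lD: "length D = m" using lP assms(4) by (simp add: D_def)
  have sufrs: "right_special u (drop k P)" for k
  proof -
    have "drop k P @ [a] \<in> lang u" if "P @ [a] \<in> lang u" for a
    proof -
      have "take k P @ (drop k P @ [a]) = P @ [a]" by simp
      then show ?thesis using lang_append[of "take k P" "drop k P @ [a]" u] that by metis
    qed
    then show ?thesis using rsP unfolding right_special_def by blast
  qed
  have DQ: "D = Q"
    using rs_unique[OF assms(1) assms(3) lD _ lQ] sufrs assms(7) by (simp add: D_def Q_def)
  have Pyl: "P @ [y] \<in> lang u" using rsP unfolding right_special_def by (cases y) auto
  have Vdec: "P @ [y] = take (n - m) P @ (Q @ [y])"
    using DQ unfolding D_def by (metis append_assoc append_take_drop_id)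
  have sigP: "sig u (P @ [y]) = sig u (Q @ [y])"
  proof (rule sig_shift[OF Vdec])
    have "drop m (Q @ [y]) = [y]" using lQ by simp
    moreover have "[y] \<in> lang u" using lang_append[of "butlast (P @ [y])" "[y]" u] Pyl by simp
    ultimately show "\<exists>k<length (Q @ [y]). significant u (drop k (Q @ [y]))"
      using lQ by (intro exI[of _ m]) (simp add: significant_def)
  next
    show "\<forall>k<length (take (n - m) P). \<not> significant u (drop k (P @ [y]))"
    proof (intro allI impI)
      fix k assume "k < length (take (n - m) P)"
      then have k: "k < n - m" using lP by simp
      define s where "s = drop k P"
      have ls: "length s = n - k" using lP by (simp add: s_def)
      have ds: "drop k (P @ [y]) = s @ [y]" using k lP by (simp add: s_def)
      have sne: "s \<noteq> []" using ls k by auto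
      have tl: "tl (s @ [y]) = tl s @ [y]" using sne by simp
      have inc: "fol u (tl s @ [y]) \<subseteq> fol u (s @ [y])"
      proof (cases "k = 0")
        case True
        then show ?thesis using whole_case[OF assms(1) assms(2) _ assms(5) assms(10)] assms(3,4)
          by (simp add: s_def P_def)
      next
        case False
        have "right_special u s" using sufrs by (simp add: s_def)
        then have "\<not> significant u s" using assms(9) ls k False by auto
        moreover have "s \<in> lang u" using \<open>right_special u s\<close> lang_append[of s "[False]" u]
          unfolding right_special_def by blast
        moreover have "length s \<ge> 2" using ls k assms(3) by simp
        ultimately have "\<not> fol u s \<subset> fol u (tl s)" unfolding significant_def by simp
        then have "fol u (tl s) \<subseteq> fol u s" using fol_mono[of u s] by blast
        then show ?thesis by (rule fol_snoc[OF sne])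
      qed
      then show "\<not> significant u (drop k (P @ [y]))"
        unfolding ds significant_def tl using ls k by auto
    qed
  qed
  then show ?thesis by (simp add: P_def Q_def)
qed

end
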